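(* Let $\Delta\ge 1$ and define $F_\Delta(k,d)=\Delta^{-k\log\frac{k}{d}}$. For every positive integer $t$ and all integers $k_1,\ldots,k_t$ and $d_1,\ldots,d_t$ with $1\le k_i<d_i$ for all $i\le t$, $$\prod_{i\le t}F_\Delta(k_i,d_i)\le F_\Delta\Big(\sum_{i\le t}k_i,\sum_{i\le t}d_i\Big).$$
   Context: Logarithms are natural. *)

theory Defs
  imports Complex_Main
begin

definition F :: "real \<Rightarrow> real \<Rightarrow> real \<Rightarrow> real" where
  "F \<Delta> k d = \<Delta> powr (- k * ln (k / d))"

end

theory Submission
  imports Defs
begin

lemma logsum:
  fixes k d :: "nat \<Rightarrow> real"
  assumes fin: "finite A" and ne: "A \<noteq> {}" and pos: "\<And>i. i \<in> A \<Longrightarrow> k i > 0 \<and> d i > 0"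
  shows "(\<Sum>i\<in>A. k i) * ln ((\<Sum>i\<in>A. k i) / (\<Sum>i\<in>A. d i)) \<le> (\<Sum>i\<in>A. k i * ln (k i / d i))"
proof -
  define K where "K = (\<Sum>i\<in>A. k i)"
  define D where "D = (\<Sum>i\<in>A. d i)"
  have Kp: "K > 0" unfolding K_def using fin ne pos by (intro sum_pos) auto
  have Dp: "D > 0" unfolding D_def using fin ne pos by (intro sum_pos) auto
  have step: "k i - d i * K / D \<le> k i * ln (k i / d i) - k i * ln (K / D)" if "i \<in> A" for i
  proof -
    have ki: "k i > 0" and di: "d i > 0" using pos that by auto
    have q: "d i * K / (k i * D) > 0" using ki di Kp Dp by simp
    have "ln (d i * K / (k i * D)) \<le> d i * K / (k i * D) - 1" using ln_le_minus_one q by blast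
    hence "k i * ln (d i * K / (k i * D)) \<le> k i * (d i * K / (k i * D) - 1)"
      using ki by (simp add: mult_left_mono)
    also have "\<dots> = d i * K / D - k i" using ki by (simp add: field_simps)
    finally have A: "k i * ln (d i * K / (k i * D)) \<le> d i * K / D - k i" .
    have "ln (d i * K / (k i * D)) = ln (K / D) - ln (k i / d i)"
    proof -
      have "d i * K / (k i * D) = (K / D) / (k i / d i)" using ki di Dp by (simp add: field_simps)
      thus ?thesis using ki di Kp Dp by (simp add: ln_div ln_mult)
    qed
    hence "k i * ln (d i * K / (k i * D)) = k i * ln (K / D) - k i * ln (k i / d i)"
      by (simp add: right_diff_distrib)
    with A have "k i * ln (K / D) - k i * ln (k i / d i) \<le> d i * K / D - k i" by linarith
    thus ?thesis by linarith
  qed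
  have "(\<Sum>i\<in>A. k i - d i * K / D) \<le> (\<Sum>i\<in>A. k i * ln (k i / d i) - k i * ln (K / D))"
    using step by (rule sum_mono)
  moreover have "(\<Sum>i\<in>A. k i - d i * K / D) = 0"
    using Dp by (simp add: sum_subtractf sum_divide_distrib[symmetric] sum_distrib_right[symmetric] K_def D_def)
  moreover have "(\<Sum>i\<in>A. k i * ln (k i / d i) - k i * ln (K / D)) = (\<Sum>i\<in>A. k i * ln (k i / d i)) - K * ln (K / D)"
    by (simp add: sum_subtractf sum_distrib_right K_def)
  ultimately show ?thesis unfolding K_def[symmetric] D_def[symmetric] by linarith
qed

theorem lemma3:
  fixes \<Delta> :: real and t :: nat and k d :: "nat \<Rightarrow> int"
  assumes "\<Delta> \<ge> 1" and "t \<ge> 1"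
    and "\<And>i. i \<in> {1..t} \<Longrightarrow> 1 \<le> k i \<and> k i < d i"
  shows "(\<Prod>i\<in>{1..t}. F \<Delta> (k i) (d i))
           \<le> F \<Delta> (\<Sum>i\<in>{1..t}. k i) (\<Sum>i\<in>{1..t}. d i)"
proof -
  have L: "(\<Sum>i\<in>{1..t}. real_of_int (k i)) * ln ((\<Sum>i\<in>{1..t}. real_of_int (k i)) / (\<Sum>i\<in>{1..t}. real_of_int (d i)))
     \<le> (\<Sum>i\<in>{1..t}. real_of_int (k i) * ln (real_of_int (k i) / real_of_int (d i)))"
    using assms(2,3) by (intro logsum) force+
  have "(\<Prod>i\<in>{1..t}. F \<Delta> (k i) (d i)) = \<Delta> powr (\<Sum>i\<in>{1..t}. - real_of_int (k i) * ln (real_of_int (k i) / real_of_int (d i)))"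
    unfolding F_def using assms(1) by (simp add: powr_sum)
  also have "\<dots> \<le> \<Delta> powr (- (\<Sum>i\<in>{1..t}. real_of_int (k i)) * ln ((\<Sum>i\<in>{1..t}. real_of_int (k i)) / (\<Sum>i\<in>{1..t}. real_of_int (d i))))"
    using assms(1) L by (intro powr_mono) (auto simp: sum_negf)
  also have "\<dots> = F \<Delta> (\<Sum>i\<in>{1..t}. k i) (\<Sum>i\<in>{1..t}. d i)"
    unfolding F_def by simp
  finally show ?thesis .
qed

end
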